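(* Let $\ell\ge1$, $r\ge3$ and $n\ge\max\{3r-5,\,2\ell+3\}$. Then $$\min_{C}|H_n^{(r)}(C)|<\min_{C'}|H_n^{(r)}(C')|,$$ where $C$ ranges over semi-valid tuples of length $2\ell+1$ in $\Omega_n$ and $C'$ over semi-valid tuples of length $2\ell+3$ in $\Omega_n$.
   Context: $\Omega_n=\{v_0,\dots,v_{n-1}\}$ with cyclic order $v_0<\dots<v_{n-1}<v_0$, indices mod $n$. For distinct vertices $u,w$, $(u,w)$ is the set of vertices strictly between $u$ and $w$ moving clockwise from $u$ to $w$, and $[u,w]=(u,w)\cup\{u,w\}$. A tuple $C=(w_1,\dots,w_{2m+1})$ of distinct vertices is semi-valid if $w_1<w_3<\dots<w_{2m+1}<w_2<w_4<\dots<w_{2m}<w_1$ in clockwise cyclic order; indices of the $w$'s mod $2m+1$. $H_n^{(r)}(C)=\{e\in\binom{\Omega_n}{r}: e\cap[w_p,w_{p-1}]\neq\emptyset\ \forall p\in\{1,\dots,2m+1\}\}$. *)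

theory Defs
  imports Main
begin

text \<open>Vertices of Omega_n are the naturals 0..n-1, v_i = i, clockwise order = increasing index mod n.\<close>

definition cyc_open :: "nat \<Rightarrow> nat \<Rightarrow> nat \<Rightarrow> nat set" where
  "cyc_open n u w = {(u + k) mod n | k. 0 < k \<and> k < (w + n - u) mod n}"

definition cyc_closed :: "nat \<Rightarrow> nat \<Rightarrow> nat \<Rightarrow> nat set" where
  "cyc_closed n u w = cyc_open n u w \<union> {u, w}"

text \<open>A list of distinct vertices s_0,...,s_{k-1} satisfies s_0 < s_1 < ... < s_{k-1} < s_0
  in the clockwise cyclic order iff some rotation of it is strictly increasing.\<close>
definition cyc_ordered :: "nat \<Rightarrow> nat list \<Rightarrow> bool" where
  "cyc_ordered n s \<longleftrightarrow> set s \<subseteq> {..<n} \<and> (\<exists>k. sorted_wrt (<) (rotate k s))"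

text \<open>Tuple C = (w_1,...,w_{2m+1}) as list with C ! i = w_{i+1}.\<close>
definition odd_even_order :: "nat list \<Rightarrow> nat list" where
  "odd_even_order C = map (\<lambda>j. C ! (2*j)) [0..<(length C + 1) div 2]
                      @ map (\<lambda>j. C ! (2*j+1)) [0..<length C div 2]"

definition semi_valid :: "nat \<Rightarrow> nat list \<Rightarrow> bool" where
  "semi_valid n C \<longleftrightarrow> odd (length C) \<and> distinct C \<and> set C \<subseteq> {..<n}
      \<and> cyc_ordered n (odd_even_order C)"

text \<open>H_n^(r)(C): w_p is C ! i, w_{p-1} is C ! ((i + length C - 1) mod length C).\<close>
definition H :: "nat \<Rightarrow> nat \<Rightarrow> nat list \<Rightarrow> nat set set" where
  "H n r C = {e. e \<subseteq> {..<n} \<and> card e = r \<and>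
      (\<forall>i < length C. e \<inter> cyc_closed n (C ! i) (C ! ((i + length C - 1) mod length C)) \<noteq> {})}"

end

theory Submission
  imports Defs
begin


definition arc :: "nat \<Rightarrow> nat \<Rightarrow> nat \<Rightarrow> nat set" where
  "arc n x s = (\<lambda>k. (x + k) mod n) ` {1..s}"

lemma arc_sub: "0 < n \<Longrightarrow> arc n x s \<subseteq> {..<n}"
  unfolding arc_def by auto

lemma arc_mod: "arc n (x mod n) s = arc n x s"
  unfolding arc_def by (simp add: mod_add_left_eq)

lemma arc_plus_n: "arc n (x + n) s = arc n x s"
proof -
  have "\<And>k. (x + n + k) mod n = (x + k) mod n"
    by (metis add.commute add.left_commute mod_add_self2)
  thus ?thesis unfolding arc_def by simp
qed

lemma mod_inj_aux:
  fixes n x k1 k2 :: nat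
  assumes "(x + k1) mod n = (x + k2) mod n" "k1 < k2" "k2 - k1 < n"
  shows False
proof -
  have "n dvd (x + k2) - (x + k1)" using assms(1) assms(2)
    by (metis add_le_cancel_left less_or_eq_imp_le mod_eq_dvd_iff_nat)
  hence "n dvd k2 - k1" by simp
  moreover have "k2 - k1 > 0" using assms(2) by simp
  ultimately show False using assms(3) by (meson nat_dvd_not_less)
qed

lemma arc_inj: "(s::nat) \<le> n \<Longrightarrow> inj_on (\<lambda>k. (x + k) mod n) {1..s}"
proof (rule inj_onI)
  fix a b assume s: "s \<le> n" and a: "a \<in> {1..s}" and b: "b \<in> {1..s}"
    and e: "(x + a) mod n = (x + b) mod n"
  show "a = b"
  proof (rule ccontr)
    assume ne: "a \<noteq> b"
    show False
    proof (cases "a < b")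
      case True
      have "b - a < n" using a b s by auto
      then show ?thesis using mod_inj_aux[OF e True] by blast
    next
      case False hence "b < a" using ne by simp
      moreover have "a - b < n" using a b s by auto
      ultimately show ?thesis using mod_inj_aux[OF e[symmetric]] by blast
    qed
  qed
qed

lemma card_arc: "(s::nat) \<le> n \<Longrightarrow> card (arc n x s) = s"
proof -
  assume "s \<le> n"
  hence "card ((\<lambda>k. (x + k) mod n) ` {1..s}) = card {1..s}" using card_image[OF arc_inj] by blast
  thus ?thesis unfolding arc_def by simp
qed

lemma arc_mem: "1 \<le> k \<Longrightarrow> k \<le> s \<Longrightarrow> (x + k) mod n \<in> arc n x s"
  unfolding arc_def by auto

lemma arc_memE: "y \<in> arc n x s \<Longrightarrow> (\<And>k. 1 \<le> k \<Longrightarrow> k \<le> s \<Longrightarrow> y = (x + k) mod n \<Longrightarrow> P) \<Longrightarrow> P"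
  unfolding arc_def by auto

lemma arc_full: "0 < n \<Longrightarrow> arc n x n = {..<n}"
  by (metis arc_sub card_arc card_lessThan card_subset_eq finite_lessThan order_refl)

lemma arc_split: "(s::nat) \<le> t \<Longrightarrow> arc n x t = arc n x s \<union> arc n (x + s) (t - s)"
proof (intro equalityI subsetI)
  fix y assume st: "s \<le> t" and y: "y \<in> arc n x t"
  then obtain k where k: "1 \<le> k" "k \<le> t" "y = (x + k) mod n" by (auto elim: arc_memE)
  show "y \<in> arc n x s \<union> arc n (x + s) (t - s)"
  proof (cases "k \<le> s")
    case True thus ?thesis using k arc_mem by blast
  next
    case False
    hence "y = (x + s + (k - s)) mod n" using k by simp
    moreover have "1 \<le> k - s" "k - s \<le> t - s" using False k by auto
    ultimately show ?thesis using arc_mem by blast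
  qed
next
  fix y assume st: "s \<le> t" and y: "y \<in> arc n x s \<union> arc n (x + s) (t - s)"
  show "y \<in> arc n x t"
  proof (cases "y \<in> arc n x s")
    case True
    then obtain k where k: "1 \<le> k" "k \<le> s" "y = (x + k) mod n" by (auto elim: arc_memE)
    thus ?thesis using st arc_mem by (meson order_trans)
  next
    case False
    hence "y \<in> arc n (x + s) (t - s)" using y by blast
    then obtain k where k: "1 \<le> k" "k \<le> t - s" "y = (x + s + k) mod n" by (auto elim: arc_memE)
    hence "y = (x + (s + k)) mod n" "1 \<le> s + k" "s + k \<le> t" using st by (auto simp: add.assoc)
    thus ?thesis using arc_mem by blast
  qed
qed

lemma arc_disj: "(s::nat) + t \<le> n \<Longrightarrow> arc n x s \<inter> arc n (x + s) t = {}"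
proof -
  assume st: "s + t \<le> n"
  have u: "arc n x (s + t) = arc n x s \<union> arc n (x + s) t" using arc_split[of s "s+t" n x] by simp
  have "card (arc n x s) + card (arc n (x + s) t) = card (arc n x s \<union> arc n (x + s) t) + card (arc n x s \<inter> arc n (x + s) t)"
    by (rule card_Un_Int) (auto simp: arc_def)
  moreover have "card (arc n x s \<union> arc n (x + s) t) = s + t" using u card_arc[OF st, of x] by simp
  moreover have "card (arc n x s) = s" "card (arc n (x + s) t) = t" using st card_arc by auto
  ultimately have "card (arc n x s \<inter> arc n (x + s) t) = 0" by linarith
  moreover have "finite (arc n x s \<inter> arc n (x + s) t)" by (auto simp: arc_def)
  ultimately show ?thesis by simp
qed

lemma arc_mono: "(a::nat) + L \<le> s \<Longrightarrow> arc n (x + a) L \<subseteq> arc n x s"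
proof
  fix y assume h: "a + L \<le> s" and y: "y \<in> arc n (x + a) L"
  then obtain k where k: "1 \<le> k" "k \<le> L" "y = (x + a + k) mod n" by (auto elim: arc_memE)
  hence "y = (x + (a + k)) mod n" "1 \<le> a + k" "a + k \<le> s" using h by (auto simp: add.assoc)
  thus "y \<in> arc n x s" using arc_mem by blast
qed

lemma cyc_closed_arc:
  assumes "0 < n" "u < n" "w < n"
  shows "cyc_closed n u w = arc n (u + n - 1) ((w + n - u) mod n + 1)"
proof -
  let ?L = "(w + n - u) mod n"
  have sh: "(u + n - 1 + k) mod n = (u + (k - 1)) mod n" if "1 \<le> k" for k
  proof -
    have "u + n - 1 + k = u + (k - 1) + n" using assms that by simp
    thus "(u + n - 1 + k) mod n = (u + (k - 1)) mod n" by simp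
  qed
  have A: "arc n (u + n - 1) (?L + 1) = (\<lambda>j. (u + j) mod n) ` {0..?L}"
  proof (intro equalityI subsetI)
    fix y assume "y \<in> arc n (u + n - 1) (?L + 1)"
    then obtain k where k: "1 \<le> k" "k \<le> ?L + 1" "y = (u + n - 1 + k) mod n" by (auto elim: arc_memE)
    hence "y = (u + (k - 1)) mod n" "k - 1 \<in> {0..?L}" using sh by auto
    thus "y \<in> (\<lambda>j. (u + j) mod n) ` {0..?L}" by blast
  next
    fix y assume "y \<in> (\<lambda>j. (u + j) mod n) ` {0..?L}"
    then obtain j where j: "j \<le> ?L" "y = (u + j) mod n" by auto
    hence "y = (u + n - 1 + (j + 1)) mod n" using sh[of "j+1"] by simp
    thus "y \<in> arc n (u + n - 1) (?L + 1)" using j arc_mem[of "j+1" "?L+1" "u+n-1" n] by simp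
  qed
  have wL: "(u + ?L) mod n = w"
  proof -
    have "(u + ?L) mod n = (u + (w + n - u)) mod n" by (simp add: mod_add_right_eq)
    also have "u + (w + n - u) = w + n" using assms by simp
    finally show ?thesis using assms by simp
  qed
  show ?thesis
  proof (intro equalityI subsetI)
    fix y assume "y \<in> cyc_closed n u w"
    then consider "y = u" | "y = w" | k where "0 < k" "k < ?L" "y = (u + k) mod n"
      unfolding cyc_closed_def cyc_open_def by auto
    then show "y \<in> arc n (u + n - 1) (?L + 1)"
    proof cases
      case 1 thus ?thesis using A assms by (auto intro!: image_eqI[where x=0])
    next
      case 2 thus ?thesis using A wL by (auto intro!: image_eqI[where x="?L"])
    next
      case 3 thus ?thesis using A by auto
    qed
  next
    fix y assume "y \<in> arc n (u + n - 1) (?L + 1)"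
    then obtain j where j: "j \<le> ?L" "y = (u + j) mod n" using A by auto
    show "y \<in> cyc_closed n u w"
    proof (cases "j = 0")
      case True thus ?thesis using j assms unfolding cyc_closed_def by simp
    next
      case False
      show ?thesis
      proof (cases "j = ?L")
        case True thus ?thesis using j wL unfolding cyc_closed_def by simp
      next
        case False
        hence "j < ?L" using j by simp
        thus ?thesis using j \<open>j \<noteq> 0\<close> unfolding cyc_closed_def cyc_open_def by auto
      qed
    qed
  qed
qed


lemma mod_cancel: "(a + k) mod n = (b + k) mod (n::nat) \<Longrightarrow> a mod n = b mod n"
  by (simp add: nat_mod_eq_iff)

definition Fc :: "nat \<Rightarrow> nat set \<Rightarrow> nat \<Rightarrow> nat \<Rightarrow> nat" where
  "Fc n P q s = card {x. x < n \<and> q \<le> card (P \<inter> arc n x s)}"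

lemma arc_partition:
  assumes "0 < n" "s \<le> n"
  shows "arc n x s \<union> arc n (x + s) (n - s) = {..<n}" "arc n x s \<inter> arc n (x + s) (n - s) = {}"
  using arc_split[OF assms(2), of n x] arc_full[OF assms(1)] arc_disj[of s "n-s" n x] assms by auto

lemma card_split_P:
  assumes "0 < n" "s \<le> n" "P \<subseteq> {..<n}"
  shows "card (P \<inter> arc n x s) + card (P \<inter> arc n (x + s) (n - s)) = card P"
proof -
  have "P = (P \<inter> arc n x s) \<union> (P \<inter> arc n (x + s) (n - s))" using arc_partition(1)[OF assms(1,2), of x] assms(3) by blast
  moreover have "(P \<inter> arc n x s) \<inter> (P \<inter> arc n (x + s) (n - s)) = {}" using arc_partition(2)[OF assms(1,2), of x] by blast
  moreover have "finite P" using assms(3) finite_subset by blast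
  ultimately show ?thesis by (metis card_Un_disjoint finite_Int)
qed

lemma shift_inj: "inj_on (\<lambda>x. (x + s) mod n) {..<(n::nat)}"
proof (rule inj_onI)
  fix a b assume "a \<in> {..<n}" "b \<in> {..<n}" and e: "(a + s) mod n = (b + s) mod n"
  have "a mod n = b mod n" by (rule mod_cancel[OF e])
  thus "a = b" using \<open>a \<in> {..<n}\<close> \<open>b \<in> {..<n}\<close> by simp
qed

lemma shift_surj: "0 < n \<Longrightarrow> (\<lambda>x. (x + s) mod n) ` {..<(n::nat)} = {..<n}"
proof -
  assume n: "0 < n"
  have "(\<lambda>x. (x + s) mod n) ` {..<n} \<subseteq> {..<n}" using n by auto
  moreover have "card ((\<lambda>x. (x + s) mod n) ` {..<n}) = n" using shift_inj card_image by fastforce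
  ultimately show ?thesis by (simp add: card_subset_eq)
qed

lemma Fc_sym:
  assumes n: "0 < n" and s: "s \<le> n" and P: "P \<subseteq> {..<n}" and q: "card P + 1 = 2 * q"
  shows "Fc n P q s + Fc n P q (n - s) = n"
proof -
  define S1 where "S1 = {x. x < n \<and> q \<le> card (P \<inter> arc n x s)}"
  define S2 where "S2 = {x. x < n \<and> q \<le> card (P \<inter> arc n x (n - s))}"
  define T where "T = {x. x < n \<and> q \<le> card (P \<inter> arc n (x + s) (n - s))}"
  let ?f = "\<lambda>x. (x + s) mod n"
  have TS1: "T = {..<n} - S1"
  proof -
    have "q \<le> card (P \<inter> arc n (x + s) (n - s)) \<longleftrightarrow> \<not> q \<le> card (P \<inter> arc n x s)" for x
      using card_split_P[OF n s P, of x] q by linarith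
    thus ?thesis unfolding T_def S1_def by auto
  qed
  have fT: "?f ` T = S2"
  proof (intro equalityI subsetI)
    fix y assume "y \<in> ?f ` T"
    then obtain x where x: "x \<in> T" "y = ?f x" by auto
    thus "y \<in> S2" using n unfolding T_def S2_def by (auto simp: arc_mod)
  next
    fix y assume y: "y \<in> S2"
    hence "y \<in> ?f ` {..<n}" using shift_surj[OF n] unfolding S2_def by auto
    then obtain x where x: "x < n" "y = ?f x" by auto
    hence "x \<in> T" using y unfolding T_def S2_def by (auto simp: arc_mod)
    thus "y \<in> ?f ` T" using x by auto
  qed
  have inj: "inj_on ?f T" by (rule inj_on_subset[OF shift_inj]) (auto simp: T_def)
  have "card T = card S2" using card_image[OF inj] fT by simp
  moreover have sub: "S1 \<subseteq> {..<n}" unfolding S1_def by auto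
  have "card T = n - card S1" unfolding TS1 using card_Diff_subset[OF finite_subset[OF sub] sub] by simp
  moreover have "card S1 \<le> n" using card_mono[OF _ sub] by simp
  moreover have "Fc n P q s = card S1" "Fc n P q (n - s) = card S2" unfolding Fc_def S1_def S2_def by simp_all
  ultimately show ?thesis by linarith
qed


lemma katona:
  assumes n: "0 < n" and s1: "1 \<le> s" and s2: "2 * s \<le> n" and P: "P \<subseteq> {..<n}" and q: "card P < 2 * q"
  shows "Fc n P q s \<le> s"
proof -
  define Ms where "Ms = {x. x < n \<and> q \<le> card (P \<inter> arc n x s)}"
  have finP: "finite P" using P finite_subset by blast
  have inter: "arc n x s \<inter> arc n x' s \<noteq> {}" if "x \<in> Ms" "x' \<in> Ms" for x x'
  proof
    assume d: "arc n x s \<inter> arc n x' s = {}"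
    have "card ((P \<inter> arc n x s) \<union> (P \<inter> arc n x' s)) = card (P \<inter> arc n x s) + card (P \<inter> arc n x' s)"
      by (rule card_Un_disjoint) (use finP d in auto)
    moreover have "card ((P \<inter> arc n x s) \<union> (P \<inter> arc n x' s)) \<le> card P"
      by (rule card_mono[OF finP]) auto
    moreover have "q \<le> card (P \<inter> arc n x s)" "q \<le> card (P \<inter> arc n x' s)" using that unfolding Ms_def by auto
    ultimately show False using q by linarith
  qed
  have finMs: "finite Ms" unfolding Ms_def by auto
  show ?thesis
  proof (cases "Ms = {}")
    case True thus ?thesis unfolding Fc_def Ms_def[symmetric] by simp
  next
    case False
    then obtain x0 where x0: "x0 \<in> Ms" by blast
    hence x0n: "x0 < n" unfolding Ms_def by auto
    define pr where "pr d = {(x0 + d) mod n, (x0 + d + n - s) mod n}" for d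
    have cover: "Ms \<subseteq> {x0} \<union> (\<Union>d\<in>{1..s-1}. Ms \<inter> pr d)"
    proof
      fix x assume x: "x \<in> Ms"
      hence xn: "x < n" unfolding Ms_def by auto
      obtain y where "y \<in> arc n x s" "y \<in> arc n x0 s" using inter[OF x x0] by blast
      then obtain k k0 where k: "1 \<le> k" "k \<le> s" "y = (x + k) mod n"
        and k0: "1 \<le> k0" "k0 \<le> s" "y = (x0 + k0) mod n" by (auto elim!: arc_memE)
      show "x \<in> {x0} \<union> (\<Union>d\<in>{1..s-1}. Ms \<inter> pr d)"
      proof (cases "k \<le> k0")
        case True
        have "(x + k) mod n = (x0 + (k0 - k) + k) mod n" using k k0 True by simp
        hence "x mod n = (x0 + (k0 - k)) mod n" by (rule mod_cancel)
        hence xe: "x = (x0 + (k0 - k)) mod n" using xn by simp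
        show ?thesis
        proof (cases "k0 = k")
          case True thus ?thesis using xe x0n by simp
        next
          case False
          hence "k0 - k \<in> {1..s-1}" using True k k0 by auto
          moreover have "x \<in> pr (k0 - k)" using xe unfolding pr_def by simp
          ultimately show ?thesis using x by blast
        qed
      next
        case False
        define d where "d = s - (k - k0)"
        have "x0 + d + n - s + k = x0 + k0 + n" using False k k0 s2 unfolding d_def by simp
        hence "(x0 + d + n - s + k) mod n = (x + k) mod n" using k k0 by simp
        hence "(x0 + d + n - s) mod n = x mod n" by (rule mod_cancel)
        hence xe: "x = (x0 + d + n - s) mod n" using xn by simp
        have "d \<in> {1..s-1}" using False k k0 unfolding d_def by auto
        moreover have "x \<in> pr d" using xe unfolding pr_def by simp
        ultimately show ?thesis using x by blast
      qed
    qed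
    have each: "card (Ms \<inter> pr d) \<le> 1" if d: "d \<in> {1..s-1}" for d
    proof -
      let ?p1 = "(x0 + d) mod n" and ?p2 = "(x0 + d + n - s) mod n"
      have "\<not> (?p1 \<in> Ms \<and> ?p2 \<in> Ms)"
      proof
        assume h: "?p1 \<in> Ms \<and> ?p2 \<in> Ms"
        have "arc n (x0 + d + n - s) s \<inter> arc n (x0 + d + n - s + s) s = {}"
          by (rule arc_disj) (use s2 in simp)
        moreover have "x0 + d + n - s + s = (x0 + d) + n" using s2 by simp
        ultimately have "arc n ?p2 s \<inter> arc n ?p1 s = {}" by (simp add: arc_mod arc_plus_n)
        thus False using inter h by blast
      qed
      hence "Ms \<inter> pr d \<subseteq> {?p1} \<or> Ms \<inter> pr d \<subseteq> {?p2}" unfolding pr_def by blast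
      thus ?thesis
      proof
        assume "Ms \<inter> pr d \<subseteq> {?p1}" thus ?thesis using card_mono[of "{?p1}"] by fastforce
      next
        assume "Ms \<inter> pr d \<subseteq> {?p2}" thus ?thesis using card_mono[of "{?p2}"] by fastforce
      qed
    qed
    have "card Ms \<le> card ({x0} \<union> (\<Union>d\<in>{1..s-1}. Ms \<inter> pr d))"
      by (rule card_mono[OF _ cover]) (auto simp: pr_def)
    also have "\<dots> \<le> card {x0} + card (\<Union>d\<in>{1..s-1}. Ms \<inter> pr d)" by (rule card_Un_le)
    also have "card (\<Union>d\<in>{1..s-1}. Ms \<inter> pr d) \<le> (\<Sum>d\<in>{1..s-1}. card (Ms \<inter> pr d))" by (rule card_UN_le) simp
    also have "\<dots> \<le> (\<Sum>d\<in>{1..s-1}. 1)" by (rule sum_mono) (use each in auto)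
    finally have "card Ms \<le> 1 + (s - 1)" by simp
    thus ?thesis using s1 unfolding Fc_def Ms_def[symmetric] by simp
  qed
qed


definition Exs :: "nat \<Rightarrow> nat \<Rightarrow> nat \<Rightarrow> nat \<Rightarrow> nat set set" where
  "Exs n r x s = {e. e \<subseteq> {..<n} \<and> card e = r \<and> x \<in> e \<and> (x + s + 1) mod n \<in> e \<and> e \<inter> arc n x s = {}}"

lemma not_in_arc_self: "x < n \<Longrightarrow> s < n \<Longrightarrow> x \<notin> arc n x s"
proof
  assume xn: "x < n" and sn: "s < n" and "x \<in> arc n x s"
  then obtain k where k: "1 \<le> k" "k \<le> s" "x = (x + k) mod n" by (auto elim: arc_memE)
  hence "(x + 0) mod n = (x + k) mod n" using xn by simp
  thus False using mod_inj_aux[of x 0 n k] k sn by simp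
qed

lemma not_in_arc_next: "s + 1 < n \<Longrightarrow> (x + s + 1) mod n \<notin> arc n x s"
proof
  assume sn: "s + 1 < n" and "(x + s + 1) mod n \<in> arc n x s"
  then obtain k where k: "1 \<le> k" "k \<le> s" "(x + s + 1) mod n = (x + k) mod n" by (auto elim: arc_memE)
  hence eq: "(x + k) mod n = (x + (s + 1)) mod n" by (simp add: add.assoc)
  have "k < s + 1" "s + 1 - k < n" using k sn by auto
  thus False using mod_inj_aux[OF eq] by blast
qed

lemma card_Exs:
  assumes xn: "x < n" and s1: "1 \<le> s" and sn: "s + 1 \<le> n" and r: "3 \<le> r"
  shows "card (Exs n r x s) = (n - s - 2) choose (r - 2)"
proof (cases "s + 1 = n")
  case True
  have n: "0 < n" using xn by simp
  have "Exs n r x s = {}"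
  proof (rule ccontr)
    assume "Exs n r x s \<noteq> {}"
    then obtain e where e: "e \<subseteq> {..<n}" "card e = r" "e \<inter> arc n x s = {}" unfolding Exs_def by auto
    have "arc n x s \<union> arc n (x + s) (n - s) = {..<n}" using arc_partition(1)[OF n] sn by simp
    moreover have "arc n (x + s) (n - s) = {x}"
    proof -
      have "n - s = 1" using True by simp
      moreover have h: "x + s + 1 = x + n" using True by simp
      have "(x + s + 1) mod n = (x + n) mod n" by (simp only: h)
      hence "(x + s + 1) mod n = x" using xn by simp
      ultimately show ?thesis unfolding arc_def by simp
    qed
    ultimately have "e \<subseteq> {x}" using e by blast
    hence "card e \<le> 1" using card_mono[of "{x}" e] by simp
    thus False using e r by simp
  qed
  moreover have "n - s - 2 = 0" using True by simp
  ultimately show ?thesis using r by simp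
next
  case False
  hence sn2: "s + 1 < n" using sn by simp
  define y where "y = (x + s + 1) mod n"
  define R where "R = {..<n} - arc n x s - {x, y}"
  have n: "0 < n" using xn by simp
  have xa: "x \<notin> arc n x s" using not_in_arc_self xn sn2 by simp
  have ya: "y \<notin> arc n x s" using not_in_arc_next sn2 unfolding y_def by simp
  have xy: "x \<noteq> y"
  proof
    assume "x = y"
    hence "(x + 0) mod n = (x + (s + 1)) mod n" using xn unfolding y_def by (simp add: add.assoc)
    thus False using mod_inj_aux[of x 0 n "s+1"] sn2 by simp
  qed
  have yn: "y < n" unfolding y_def using n by simp
  have cR: "card R = n - s - 2"
  proof -
    have sub: "arc n x s \<union> {x, y} \<subseteq> {..<n}" using arc_sub[OF n] xn yn by auto
    have "card (arc n x s \<union> {x, y}) = s + 2"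
      using card_arc[of s n x] sn xa ya xy by (simp add: arc_def card_insert_if)
    moreover have "R = {..<n} - (arc n x s \<union> {x, y})" unfolding R_def by blast
    ultimately show ?thesis using card_Diff_subset[OF finite_subset[OF sub] sub] by simp
  qed
  have finR: "finite R" unfolding R_def by simp
  have img: "Exs n r x s = (\<lambda>A. A \<union> {x, y}) ` {A. A \<subseteq> R \<and> card A = r - 2}"
  proof (intro equalityI subsetI)
    fix e assume "e \<in> Exs n r x s"
    hence e: "e \<subseteq> {..<n}" "card e = r" "x \<in> e" "y \<in> e" "e \<inter> arc n x s = {}"
      unfolding Exs_def y_def by auto
    have fe: "finite e" using e(1) finite_subset by blast
    have "e - {x, y} \<subseteq> R" using e unfolding R_def by blast
    moreover have "card (e - {x, y}) = r - 2" using card_Diff_subset[OF _ , of "{x,y}" e] e xy fe by simp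
    moreover have "e = (e - {x, y}) \<union> {x, y}" using e by blast
    ultimately show "e \<in> (\<lambda>A. A \<union> {x, y}) ` {A. A \<subseteq> R \<and> card A = r - 2}" by blast
  next
    fix e assume "e \<in> (\<lambda>A. A \<union> {x, y}) ` {A. A \<subseteq> R \<and> card A = r - 2}"
    then obtain A where A: "A \<subseteq> R" "card A = r - 2" "e = A \<union> {x, y}" by auto
    have fA: "finite A" using A(1) finR finite_subset by blast
    have "x \<notin> A" "y \<notin> A" using A(1) unfolding R_def by auto
    hence "card e = r" using A fA xy r by (simp add: card_insert_if)
    moreover have "e \<subseteq> {..<n}" using A(1,3) xn yn unfolding R_def by auto
    moreover have "e \<inter> arc n x s = {}" using A(1,3) xa ya unfolding R_def by auto
    ultimately show "e \<in> Exs n r x s" using A(3) unfolding Exs_def y_def by auto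
  qed
  have inj: "inj_on (\<lambda>A. A \<union> {x, y}) {A. A \<subseteq> R \<and> card A = r - 2}"
  proof (rule inj_onI)
    fix A B assume "A \<in> {A. A \<subseteq> R \<and> card A = r - 2}" "B \<in> {A. A \<subseteq> R \<and> card A = r - 2}"
      and eq: "A \<union> {x, y} = B \<union> {x, y}"
    hence "A \<subseteq> R" "B \<subseteq> R" by auto
    hence "x \<notin> A" "y \<notin> A" "x \<notin> B" "y \<notin> B" unfolding R_def by auto
    thus "A = B" using eq by blast
  qed
  have "card (Exs n r x s) = card {A. A \<subseteq> R \<and> card A = r - 2}" using img card_image[OF inj] by simp
  also have "\<dots> = card R choose (r - 2)" by (rule n_subsets[OF finR])
  finally show ?thesis using cR by simp
qed


lemma mod_dist: "(a::nat) \<le> n \<Longrightarrow> ((a + d) mod n + (n - a)) mod n = d mod n"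
proof -
  assume a: "a \<le> n"
  have "((a + d) mod n + (n - a)) mod n = (a + d + (n - a)) mod n" by (simp add: mod_add_left_eq)
  also have "a + d + (n - a) = d + n" using a by simp
  finally show ?thesis by simp
qed

lemma gap_arc:
  assumes n: "0 < n" and e: "e \<subseteq> {..<n}" "e \<noteq> {}" and z: "z < n" and L: "1 \<le> L"
    and dis: "e \<inter> arc n z L = {}"
  shows "\<exists>x s. x \<in> e \<and> 1 \<le> s \<and> s + 1 \<le> n \<and> (x + s + 1) mod n \<in> e \<and> e \<inter> arc n x s = {}
            \<and> arc n z L \<subseteq> arc n x s"
proof -
  have fe: "finite e" using e(1) finite_subset by blast
  define \<delta> where "\<delta> v = (z + (n - v)) mod n" for v
  have "Min (\<delta> ` e) \<in> \<delta> ` e" using fe e(2) by (intro Min_in) auto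
  then obtain x where x: "x \<in> e" "\<delta> x = Min (\<delta> ` e)" by auto
  have xmin: "\<delta> x \<le> \<delta> v" if "v \<in> e" for v using x(2) fe that by simp
  have xn: "x < n" using x e by auto
  define d0 where "d0 = \<delta> x"
  have d0n: "d0 < n" unfolding d0_def \<delta>_def using n by simp
  have zx: "(x + d0) mod n = z"
  proof -
    have "(x + d0) mod n = (x + (z + (n - x))) mod n" unfolding d0_def \<delta>_def by (simp add: mod_add_right_eq)
    also have "x + (z + (n - x)) = z + n" using xn by simp
    finally show ?thesis using z by simp
  qed
  define \<beta> where "\<beta> v = (v + (n - Suc x)) mod n" for v
  have "Min (\<beta> ` e) \<in> \<beta> ` e" using fe e(2) by (intro Min_in) auto
  then obtain y0 where y0: "y0 \<in> e" "\<beta> y0 = Min (\<beta> ` e)" by auto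
  have ymin: "\<beta> y0 \<le> \<beta> v" if "v \<in> e" for v using y0(2) fe that by simp
  define s where "s = \<beta> y0"
  have y0n: "y0 < n" using y0 e by auto
  have sn: "s + 1 \<le> n" unfolding s_def \<beta>_def using n by (simp add: Suc_leI)
  have hy: "(x + s + 1) mod n = y0"
  proof -
    have "(x + s + 1) mod n = (Suc x + (y0 + (n - Suc x)) mod n) mod n" unfolding s_def \<beta>_def by simp
    also have "\<dots> = (Suc x + (y0 + (n - Suc x))) mod n" by (simp only: mod_add_right_eq)
    also have "Suc x + (y0 + (n - Suc x)) = y0 + n" using xn by simp
    finally show ?thesis using y0n by simp
  qed
  have free: "e \<inter> arc n x s = {}"
  proof (rule ccontr)
    assume "e \<inter> arc n x s \<noteq> {}"
    then obtain v where v: "v \<in> e" "v \<in> arc n x s" by blast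
    then obtain k where k: "1 \<le> k" "k \<le> s" "v = (x + k) mod n" by (auto elim: arc_memE)
    have "\<beta> v = ((Suc x + (k - 1)) mod n + (n - Suc x)) mod n" unfolding \<beta>_def using k by simp
    also have "\<dots> = (k - 1) mod n" by (rule mod_dist) (use xn in simp)
    also have "\<dots> = k - 1" using k sn by simp
    finally have "\<beta> v < s" using k by simp
    thus False using ymin[OF v(1)] unfolding s_def by simp
  qed
  have big: "d0 + L \<le> s"
  proof (rule ccontr)
    assume "\<not> d0 + L \<le> s"
    hence b: "s + 1 \<le> d0 + L" by simp
    show False
    proof (cases "s + 1 \<le> d0")
      case True
      have "z = (x + (s + 1) + (d0 - (s + 1))) mod n" using zx True by simp
      also have "\<dots> = ((x + s + 1) mod n + (d0 - (s + 1))) mod n" by (simp add: mod_add_left_eq add.assoc)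
      finally have zy: "z = (y0 + (d0 - (s + 1))) mod n" using hy by simp
      have "\<delta> y0 = ((y0 + (d0 - (s + 1))) mod n + (n - y0)) mod n" unfolding \<delta>_def zy by simp
      also have "\<dots> = (d0 - (s + 1)) mod n" by (rule mod_dist) (use y0n in simp)
      also have "\<dots> = d0 - (s + 1)" using d0n by simp
      finally have "\<delta> y0 < d0" using True by simp
      thus False using xmin[OF y0(1)] unfolding d0_def by simp
    next
      case False
      have "y0 = (x + d0 + (s + 1 - d0)) mod n" using hy False by simp
      also have "\<dots> = ((x + d0) mod n + (s + 1 - d0)) mod n" by (simp add: mod_add_left_eq)
      finally have "y0 = (z + (s + 1 - d0)) mod n" using zx by simp
      moreover have "1 \<le> s + 1 - d0" "s + 1 - d0 \<le> L" using False b by auto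
      ultimately have "y0 \<in> arc n z L" using arc_mem by blast
      thus False using dis y0(1) by blast
    qed
  qed
  have "arc n z L = arc n (x + d0) L" using arc_mod[of n "x + d0" L] zx by simp
  also have "\<dots> \<subseteq> arc n x s" by (rule arc_mono[OF big])
  finally have sub: "arc n z L \<subseteq> arc n x s" .
  have "1 \<le> s" using big L by simp
  thus ?thesis using x(1) sn hy y0(1) free sub by blast
qed

lemma Exs_arcs_disj:
  assumes xn: "x < n" and xn': "x' < n" and e1: "e \<in> Exs n r x s" and e2: "e \<in> Exs n r x' s'"
    and ne: "(x, s) \<noteq> (x', s')"
  shows "arc n x s \<inter> arc n x' s' = {}"
proof (cases "x = x'")
  case True
  hence ss: "s \<noteq> s'" using ne by simp
  have False
  proof (cases "s < s'")
    case True
    have "(x + (s + 1)) mod n \<in> arc n x s'" by (rule arc_mem) (use True in auto)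
    thus False using e1 e2 \<open>x = x'\<close> unfolding Exs_def by (auto simp: add.assoc)
  next
    case False
    hence "s' < s" using ss by simp
    have "(x + (s' + 1)) mod n \<in> arc n x s" by (rule arc_mem) (use \<open>s' < s\<close> in auto)
    thus False using e1 e2 \<open>x = x'\<close> unfolding Exs_def by (auto simp: add.assoc)
  qed
  thus ?thesis ..
next
  case False
  show ?thesis
  proof (rule ccontr)
    assume "arc n x s \<inter> arc n x' s' \<noteq> {}"
    then obtain z where "z \<in> arc n x s" "z \<in> arc n x' s'" by blast
    then obtain k k' where k: "1 \<le> k" "k \<le> s" "z = (x + k) mod n"
      and k': "1 \<le> k'" "k' \<le> s'" "z = (x' + k') mod n" by (auto elim!: arc_memE)
    show False
    proof (cases "k \<le> k'")
      case True
      have "(x + k) mod n = (x' + (k' - k) + k) mod n" using k k' True by simp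
      hence "x mod n = (x' + (k' - k)) mod n" by (rule mod_cancel)
      hence xe: "x = (x' + (k' - k)) mod n" using xn by simp
      show False
      proof (cases "k = k'")
        case True thus False using xe xn' \<open>x \<noteq> x'\<close> by simp
      next
        case False
        have "(x' + (k' - k)) mod n \<in> arc n x' s'" by (rule arc_mem) (use True False k k' in auto)
        hence "x \<in> arc n x' s'" using xe by simp
        thus False using e1 e2 unfolding Exs_def by blast
      qed
    next
      case False
      have "(x' + k') mod n = (x + (k - k') + k') mod n" using k k' False by simp
      hence "x' mod n = (x + (k - k')) mod n" by (rule mod_cancel)
      hence xe: "x' = (x + (k - k')) mod n" using xn' by simp
      have "(x + (k - k')) mod n \<in> arc n x s" by (rule arc_mem) (use False k k' in auto)
      hence "x' \<in> arc n x s" using xe by simp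
      thus False using e1 e2 unfolding Exs_def by blast
    qed
  qed
qed


lemma cyc_closed_mem:
  assumes n: "0 < n" and u: "u < n" and w: "w < n" and j: "j \<le> (w + n - u) mod n"
  shows "(u + j) mod n \<in> cyc_closed n u w"
proof -
  have "(u + n - 1 + (j + 1)) mod n \<in> arc n (u + n - 1) ((w + n - u) mod n + 1)"
    by (rule arc_mem) (use j in auto)
  moreover have h: "u + n - 1 + (j + 1) = u + j + n" using n by simp
  have "(u + n - 1 + (j + 1)) mod n = (u + j + n) mod n" by (simp only: h)
  hence "(u + n - 1 + (j + 1)) mod n = (u + j) mod n" by simp
  ultimately show ?thesis using cyc_closed_arc[OF n u w] by simp
qed

lemma sorted_le: "sorted_wrt (<) S \<Longrightarrow> i \<le> j \<Longrightarrow> j < length S \<Longrightarrow> S ! i \<le> (S ! j :: nat)"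
proof -
  assume a: "sorted_wrt (<) S" "i \<le> j" "j < length S"
  show ?thesis
  proof (cases "i = j")
    case False thus ?thesis using sorted_wrt_nth_less[OF a(1), of i j] a by simp
  qed simp
qed

lemma sorted_window:
  assumes sorted: "sorted_wrt (<) S" and len: "length S = K" and K: "K = 2 * M + 1"
    and Sn: "set S \<subseteq> {..<n}" and b: "b < K" and t: "t \<le> M"
  shows "S ! ((b + t) mod K) \<in> cyc_closed n (S ! b) (S ! ((b + M) mod K))"
proof -
  have inS: "S ! i < n" if "i < K" for i
  proof -
    have "S ! i \<in> set S" by (rule nth_mem) (use len that in simp)
    thus ?thesis using Sn by auto
  qed
  have n: "0 < n" using inS[OF b] by simp
  let ?u = "S ! b"
  have un: "?u < n" using inS b .
  show ?thesis
  proof (cases "b + M < K")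
    case True
    let ?w = "S ! (b + M)" and ?v = "S ! (b + t)"
    have wn: "?w < n" using inS True .
    have uv: "?u \<le> ?v" "?v \<le> ?w" using sorted_le[OF sorted] True t len by auto
    have h: "?w + n - ?u = (?w - ?u) + n" using uv by simp
    have "(?w + n - ?u) mod n = ((?w - ?u) + n) mod n" by (simp only: h)
    also have "\<dots> = ?w - ?u" using wn by simp
    finally have "(?u + (?v - ?u)) mod n \<in> cyc_closed n ?u ?w"
      by (intro cyc_closed_mem[OF n un wn]) (use uv in simp)
    moreover have "(?u + (?v - ?u)) mod n = ?v" using uv wn by simp
    ultimately show ?thesis using True t by simp
  next
    case False
    have bm: "(b + M) mod K = b + M - K" using False b K by (simp add: le_mod_geq)
    let ?w = "S ! (b + M - K)"
    have wn: "?w < n" using inS False b K by simp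
    have wu: "?w < ?u" using sorted_wrt_nth_less[OF sorted, of "b + M - K" b] False b K len by simp
    have L: "(?w + n - ?u) mod n = ?w + n - ?u" using wu un by simp
    show ?thesis
    proof (cases "b + t < K")
      case True
      let ?v = "S ! (b + t)"
      have vn: "?v < n" using inS True .
      have uv: "?u \<le> ?v" using sorted_le[OF sorted] True len by auto
      have "(?u + (?v - ?u)) mod n \<in> cyc_closed n ?u ?w"
        by (intro cyc_closed_mem[OF n un wn]) (use uv vn L in simp)
      moreover have "(?u + (?v - ?u)) mod n = ?v" using uv vn by simp
      ultimately show ?thesis using True bm by simp
    next
      case False
      have bt: "(b + t) mod K = b + t - K" using False b K t by (simp add: le_mod_geq)
      let ?v = "S ! (b + t - K)"
      have vw: "?v \<le> ?w" using sorted_le[OF sorted, of "b + t - K" "b + M - K"] t b K len False by simp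
      have "?v + n - ?u \<le> ?w + n - ?u" by (rule diff_le_mono[OF add_le_mono1[OF vw]])
      hence "(?u + (?v + n - ?u)) mod n \<in> cyc_closed n ?u ?w"
        by (intro cyc_closed_mem[OF n un wn]) (simp only: L)
      moreover have "(?u + (?v + n - ?u)) mod n = ?v" using vw wn un by simp
      ultimately show ?thesis using bt bm by simp
    qed
  qed
qed

definition pos :: "nat \<Rightarrow> nat \<Rightarrow> nat" where
  "pos M c = (if even c then c div 2 else M + 1 + c div 2)"

lemma mod_shift_eq: "y = x + K \<Longrightarrow> x < K \<Longrightarrow> y mod K = (x::nat)" by simp

lemma pos_even: "pos M (2 * a) = a" unfolding pos_def by simp
lemma pos_odd: "pos M (2 * a + 1) = M + 1 + a" unfolding pos_def by simp

lemma pos_lt: "c < 2 * M + 1 \<Longrightarrow> pos M c < 2 * M + 1"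
proof -
  assume c: "c < 2 * M + 1"
  show ?thesis
  proof (cases "even c")
    case True then obtain a where a: "c = 2 * a" by blast
    thus ?thesis using c pos_even by simp
  next
    case False then obtain a where a: "c = 2 * a + 1" using oddE by blast
    thus ?thesis using c pos_odd by simp
  qed
qed

lemma pos_shift:
  assumes c: "c < 2 * M + 1" and t: "t \<le> M"
  shows "pos M ((c + 2 * t) mod (2 * M + 1)) = (pos M c + t) mod (2 * M + 1)"
proof (cases "even c")
  case True
  then obtain a where a: "c = 2 * a" by blast
  show ?thesis
  proof (cases "a + t \<le> M")
    case True
    have e1: "(c + 2 * t) mod (2 * M + 1) = 2 * (a + t)" using a True by simp
    have e2: "pos M (2 * (a + t)) = a + t" by (rule pos_even)
    have "pos M ((c + 2 * t) mod (2 * M + 1)) = a + t" by (simp only: e1 e2)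
    moreover have "(pos M c + t) mod (2 * M + 1) = a + t" using a True pos_even by simp
    ultimately show ?thesis by simp
  next
    case False
    have "(c + 2 * t) mod (2 * M + 1) = 2 * (a + t - M - 1) + 1"
    proof -
      have "c + 2 * t = (2 * (a + t - M - 1) + 1) + (2 * M + 1)" using a False by simp
      moreover have "2 * (a + t - M - 1) + 1 < 2 * M + 1" using a c t False by simp
      ultimately show ?thesis by (rule mod_shift_eq)
    qed
    moreover have "M + 1 + (a + t - M - 1) = a + t" using False by simp
    moreover have "a + t < 2 * M + 1" using a c t by simp
    ultimately show ?thesis using a pos_odd pos_even by simp
  qed
next
  case False
  then obtain a where a: "c = 2 * a + 1" using oddE by blast
  show ?thesis
  proof (cases "a + t < M")
    case True
    have e1: "(c + 2 * t) mod (2 * M + 1) = 2 * (a + t) + 1" using a True by simp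
    have e2: "pos M (2 * (a + t) + 1) = M + 1 + (a + t)" by (rule pos_odd)
    have "pos M ((c + 2 * t) mod (2 * M + 1)) = M + 1 + (a + t)" by (simp only: e1 e2)
    moreover have "M + 1 + a + t < 2 * M + 1" using True by simp
    moreover have "pos M c = M + 1 + a" using a pos_odd by simp
    ultimately show ?thesis by simp
  next
    case False
    have "(c + 2 * t) mod (2 * M + 1) = 2 * (a + t - M)"
    proof -
      have "c + 2 * t = 2 * (a + t - M) + (2 * M + 1)" using a False by simp
      moreover have "2 * (a + t - M) < 2 * M + 1" using a c t False by simp
      ultimately show ?thesis by (rule mod_shift_eq)
    qed
    moreover have "(M + 1 + a + t) mod (2 * M + 1) = a + t - M"
    proof -
      have "M + 1 + a + t = (a + t - M) + (2 * M + 1)" using False by simp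
      moreover have "a + t - M < 2 * M + 1" using a c t by simp
      ultimately show ?thesis by (rule mod_shift_eq)
    qed
    moreover have "pos M (2 * (a + t - M)) = a + t - M" by (rule pos_even)
    moreover have "pos M c = M + 1 + a" using a pos_odd by simp
    ultimately show ?thesis by (simp add: add.assoc)
  qed
qed

lemma oeo_len: "length C = 2 * M + 1 \<Longrightarrow> length (odd_even_order C) = 2 * M + 1"
  unfolding odd_even_order_def by simp

lemma oeo_nth:
  assumes len: "length C = 2 * M + 1" and c: "c < 2 * M + 1"
  shows "odd_even_order C ! (pos M c) = C ! c"
proof (cases "even c")
  case True
  have "c div 2 < M + 1" using c by simp
  moreover have "2 * (c div 2) = c" using True by simp
  ultimately show ?thesis using len True unfolding odd_even_order_def pos_def by (simp add: nth_append del: upt_Suc)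
next
  case False
  have "c div 2 < M" using c False by presburger
  moreover have "2 * (c div 2) + 1 = c" using False by presburger
  ultimately show ?thesis using len False unfolding odd_even_order_def pos_def by (simp add: nth_append del: upt_Suc)
qed

lemma window_contains:
  assumes sv: "semi_valid n C" and len: "length C = 2 * M + 1" and i: "i < 2 * M + 1" and t: "t \<le> M"
  shows "C ! ((i + 2 * t) mod (2 * M + 1)) \<in> cyc_closed n (C ! i) (C ! ((i + (2 * M + 1) - 1) mod (2 * M + 1)))"
proof -
  define K where "K = 2 * M + 1"
  define L where "L = odd_even_order C"
  have lenL: "length L = K" unfolding L_def K_def using oeo_len[OF len] .
  from sv have co: "cyc_ordered n L" unfolding semi_valid_def L_def by simp
  then obtain k where sk: "sorted_wrt (<) (rotate k L)" and Ln: "set L \<subseteq> {..<n}" unfolding cyc_ordered_def by auto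
  define S where "S = rotate k L"
  have lenS: "length S = K" unfolding S_def using lenL by simp
  have Sn: "set S \<subseteq> {..<n}" unfolding S_def using Ln by simp
  define a where "a = pos M i"
  have aK: "a < K" unfolding a_def K_def using pos_lt i by simp
  define b where "b = (a + (K - k mod K)) mod K"
  have Kpos: "0 < K" unfolding K_def by simp
  have bK: "b < K" unfolding b_def using Kpos by simp
  have kb: "(k + b) mod K = a"
  proof -
    have "(k + b) mod K = (k + (a + (K - k mod K))) mod K" unfolding b_def by (simp add: mod_add_right_eq)
    also have "\<dots> = (k mod K + (a + (K - k mod K))) mod K" by (simp add: mod_add_left_eq)
    also have "k mod K + (a + (K - k mod K)) = a + K"
    proof -
      have "k mod K < K" using Kpos by simp
      thus ?thesis by simp
    qed
    finally show ?thesis using aK by simp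
  qed
  have Snth: "S ! ((b + t') mod K) = L ! ((a + t') mod K)" for t'
  proof -
    have "S ! ((b + t') mod K) = L ! ((k + (b + t') mod K) mod K)" unfolding S_def
      using nth_rotate[of "(b + t') mod K" L k] lenL Kpos by simp
    also have "(k + (b + t') mod K) mod K = (a + t') mod K"
    proof -
      have "(k + (b + t') mod K) mod K = (k + b + t') mod K" by (simp add: mod_add_right_eq add.assoc)
      also have "\<dots> = ((k + b) mod K + t') mod K" by (simp add: mod_add_left_eq)
      finally show ?thesis using kb by simp
    qed
    finally show ?thesis .
  qed
  have c1: "C ! ((i + 2 * t) mod K) = L ! ((a + t) mod K)"
    using oeo_nth[OF len, of "(i + 2 * t) mod K"] pos_shift[OF i t] unfolding L_def a_def K_def by simp
  have "(i + K - 1) mod K = (i + 2 * M) mod K" unfolding K_def by simp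
  hence c2: "C ! ((i + K - 1) mod K) = L ! ((a + M) mod K)"
    using oeo_nth[OF len, of "(i + 2 * M) mod K"] pos_shift[OF i, of M] unfolding L_def a_def K_def by simp
  have c0: "C ! i = L ! a" using oeo_nth[OF len i] unfolding L_def a_def by simp
  have "S ! ((b + t) mod K) \<in> cyc_closed n (S ! b) (S ! ((b + M) mod K))"
    by (rule sorted_window[OF sk[folded S_def] lenS K_def Sn bK t])
  moreover have "S ! b = L ! a" using Snth[of 0] bK aK by simp
  ultimately show ?thesis using c0 c1 c2 Snth unfolding K_def by simp
qed

lemma window_card:
  assumes sv: "semi_valid n C" and len: "length C = 2 * M + 1" and i: "i < 2 * M + 1"
  shows "M + 1 \<le> card (set C \<inter> cyc_closed n (C ! i) (C ! ((i + (2 * M + 1) - 1) mod (2 * M + 1))))"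
proof -
  let ?K = "2 * M + 1"
  let ?f = "\<lambda>t. C ! ((i + 2 * t) mod ?K)"
  have dC: "distinct C" using sv unfolding semi_valid_def by simp
  have inj: "inj_on ?f {0..M}"
  proof (rule inj_onI)
    fix t1 t2 assume t1: "t1 \<in> {0..M}" and t2: "t2 \<in> {0..M}" and eq: "?f t1 = ?f t2"
    have "(i + 2 * t1) mod ?K = (i + 2 * t2) mod ?K"
      using eq dC len by (simp add: nth_eq_iff_index_eq)
    show "t1 = t2"
    proof (rule ccontr)
      assume "t1 \<noteq> t2"
      then consider "t1 < t2" | "t2 < t1" by linarith
      thus False
      proof cases
        case 1
        have "2 * t1 < 2 * t2" "2 * t2 - 2 * t1 < ?K" using 1 t1 t2 by auto
        thus False using mod_inj_aux \<open>(i + 2 * t1) mod ?K = (i + 2 * t2) mod ?K\<close> by blast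
      next
        case 2
        have "2 * t2 < 2 * t1" "2 * t1 - 2 * t2 < ?K" using 2 t1 t2 by auto
        thus False using mod_inj_aux \<open>(i + 2 * t1) mod ?K = (i + 2 * t2) mod ?K\<close>[symmetric] by blast
      qed
    qed
  qed
  have "?f ` {0..M} \<subseteq> set C \<inter> cyc_closed n (C ! i) (C ! ((i + ?K - 1) mod ?K))"
    using window_contains[OF sv len i] len by auto
  hence "card (?f ` {0..M}) \<le> card (set C \<inter> cyc_closed n (C ! i) (C ! ((i + ?K - 1) mod ?K)))"
    by (intro card_mono) auto
  thus ?thesis using card_image[OF inj] by simp
qed


lemma sym_sum_ineq:
  fixes F G w :: "nat \<Rightarrow> nat" and n s0 :: nat
  assumes symF: "\<And>s. 1 \<le> s \<Longrightarrow> s \<le> n - 1 \<Longrightarrow> F s + F (n - s) = n"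
      and symG: "\<And>s. 1 \<le> s \<Longrightarrow> s \<le> n - 1 \<Longrightarrow> G s + G (n - s) = n"
      and le: "\<And>s. 1 \<le> s \<Longrightarrow> 2 * s < n \<Longrightarrow> F s \<le> G s"
      and wmono: "\<And>s t. 1 \<le> s \<Longrightarrow> s \<le> t \<Longrightarrow> t \<le> n - 1 \<Longrightarrow> w t \<le> w s"
      and s01: "1 \<le> s0" and s02: "2 * s0 < n" and s03: "F s0 < G s0" and s04: "w (n - s0) < w s0"
  shows "(\<Sum>s=1..n-1. w s * F s) < (\<Sum>s=1..n-1. w s * G s)"
proof -
  define D where "D s = int (F s) - int (G s)" for s
  define W where "W s = int (w s)" for s
  define T where "T s = (W s - W (n - s)) * D s" for s
  have Dneg: "D (n - s) = - D s" if "1 \<le> s" "s \<le> n - 1" for s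
    using symF[OF that] symG[OF that] unfolding D_def by simp
  have rev: "(\<Sum>s=1..n-1. W s * D s) = (\<Sum>s=1..n-1. W (n - s) * D (n - s))"
  proof -
    have "(\<Sum>s=1..n-1. W s * D s) = (\<Sum>s=1..n-1. W (n - 1 + 1 - s) * D (n - 1 + 1 - s))"
      by (rule sum.atLeastAtMost_rev)
    also have "\<dots> = (\<Sum>s=1..n-1. W (n - s) * D (n - s))"
      by (rule sum.cong) auto
    finally show ?thesis .
  qed
  also have "\<dots> = (\<Sum>s=1..n-1. - (W (n - s) * D s))"
    by (rule sum.cong) (auto simp: Dneg)
  finally have X: "(\<Sum>s=1..n-1. W s * D s) = - (\<Sum>s=1..n-1. W (n - s) * D s)"
    by (simp add: sum_negf)
  have two: "2 * (\<Sum>s=1..n-1. W s * D s) = (\<Sum>s=1..n-1. T s)"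
  proof -
    have "2 * (\<Sum>s=1..n-1. W s * D s) = (\<Sum>s=1..n-1. W s * D s) - (\<Sum>s=1..n-1. W (n - s) * D s)"
      using X by simp
    also have "\<dots> = (\<Sum>s=1..n-1. T s)" unfolding T_def by (simp add: sum_subtractf left_diff_distrib)
    finally show ?thesis .
  qed
  have Tle: "T s \<le> 0" if s: "s \<in> {1..n-1}" for s
  proof -
    have s1: "1 \<le> s" "s \<le> n - 1" using s by auto
    consider "2 * s < n" | "2 * s = n" | "n < 2 * s" by linarith
    thus ?thesis
    proof cases
      case 1
      have "W (n - s) \<le> W s" unfolding W_def using wmono[of s "n - s"] s1 1 by simp
      moreover have "D s \<le> 0" unfolding D_def using le[OF s1(1) 1] by simp
      ultimately show ?thesis unfolding T_def by (simp add: mult_nonneg_nonpos)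
    next
      case 2
      hence "n - s = s" by simp
      hence "F s = G s" using symF[OF s1] symG[OF s1] by simp
      thus ?thesis unfolding T_def D_def by simp
    next
      case 3
      have h: "1 \<le> n - s" "n - s \<le> n - 1" "2 * (n - s) < n" using s1 3 by auto
      have "W s \<le> W (n - s)" unfolding W_def using wmono[of "n - s" s] h s1 3 by simp
      moreover have "D (n - s) \<le> 0" unfolding D_def using le[OF h(1) h(3)] by simp
      hence "D s \<ge> 0" using Dneg[OF s1] by simp
      ultimately show ?thesis unfolding T_def by (simp add: mult_nonpos_nonneg)
    qed
  qed
  have s0in: "s0 \<in> {1..n-1}" using s01 s02 by auto
  have Ts0: "T s0 < 0"
  proof -
    have "W (n - s0) < W s0" unfolding W_def using s04 by simp
    moreover have "D s0 < 0" unfolding D_def using s03 by simp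
    ultimately show ?thesis unfolding T_def by (simp add: mult_pos_neg)
  qed
  have "(\<Sum>s=1..n-1. T s) = T s0 + (\<Sum>s\<in>{1..n-1} - {s0}. T s)"
    using sum.remove[OF _ s0in] by simp
  also have "(\<Sum>s\<in>{1..n-1} - {s0}. T s) \<le> 0" by (rule sum_nonpos) (use Tle in auto)
  hence "T s0 + (\<Sum>s\<in>{1..n-1} - {s0}. T s) < 0" using Ts0 by simp
  finally have "(\<Sum>s=1..n-1. W s * D s) < 0" using two by simp
  hence "(\<Sum>s=1..n-1. W s * int (F s)) < (\<Sum>s=1..n-1. W s * int (G s))"
    unfolding D_def by (simp add: right_diff_distrib sum_subtractf)
  moreover have "int (\<Sum>s=1..n-1. w s * F s) = (\<Sum>s=1..n-1. W s * int (F s))"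
    unfolding W_def by (simp add: of_nat_sum)
  moreover have "int (\<Sum>s=1..n-1. w s * G s) = (\<Sum>s=1..n-1. W s * int (G s))"
    unfolding W_def by (simp add: of_nat_sum)
  ultimately have "int (\<Sum>s=1..n-1. w s * F s) < int (\<Sum>s=1..n-1. w s * G s)" by (simp only:)
  thus ?thesis by (simp only: of_nat_less_iff)
qed


declare upt_Suc[simp del]

definition blk :: "nat \<Rightarrow> nat list" where
  "blk m = map (pos m) [0..<2 * m + 1]"

lemma blk_len: "length (blk m) = 2 * m + 1" unfolding blk_def by simp

lemma blk_nth: "i < 2 * m + 1 \<Longrightarrow> blk m ! i = pos m i" unfolding blk_def by simp

lemma pos_inj: "inj_on (pos m) {0..<2 * m + 1}"
proof (rule inj_onI)
  fix a b assume a: "a \<in> {0..<2 * m + 1}" and b: "b \<in> {0..<2 * m + 1}" and e: "pos m a = pos m b"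
  show "a = b"
  proof (cases "even a")
    case ea: True
    show ?thesis
    proof (cases "even b")
      case True thus ?thesis using ea e unfolding pos_def by presburger
    next
      case False
      hence "pos m b \<ge> m + 1" unfolding pos_def by simp
      moreover have "pos m a \<le> m" using ea a unfolding pos_def by simp
      ultimately show ?thesis using e by simp
    qed
  next
    case oa: False
    show ?thesis
    proof (cases "even b")
      case True
      hence "pos m b \<le> m" using b unfolding pos_def by simp
      moreover have "pos m a \<ge> m + 1" using oa unfolding pos_def by simp
      ultimately show ?thesis using e by simp
    next
      case False thus ?thesis using oa e unfolding pos_def by presburger
    qed
  qed
qed

lemma blk_distinct: "distinct (blk m)"
  unfolding blk_def using pos_inj by (simp add: distinct_map)

lemma blk_set: "set (blk m) \<subseteq> {..<2 * m + 1}"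
  unfolding blk_def using pos_lt by auto

lemma blk_oeo: "odd_even_order (blk m) = [0..<2 * m + 1]"
proof (rule nth_equalityI)
  show "length (odd_even_order (blk m)) = length [0..<2 * m + 1]" using oeo_len[OF blk_len] by simp
next
  fix j assume "j < length (odd_even_order (blk m))"
  hence j: "j < 2 * m + 1" using oeo_len[OF blk_len] by simp
  show "odd_even_order (blk m) ! j = [0..<2 * m + 1] ! j"
  proof (cases "j \<le> m")
    case True
    have "odd_even_order (blk m) ! j = blk m ! (2 * j)"
      unfolding odd_even_order_def blk_len using True by (simp add: nth_append del: upt_Suc)
    also have "\<dots> = j" using True by (simp add: blk_nth pos_even)
    finally show ?thesis using j by simp
  next
    case False
    have "j - m - 1 < m" using False j by simp
    hence "odd_even_order (blk m) ! j = blk m ! (2 * (j - m - 1) + 1)"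
      unfolding odd_even_order_def blk_len using False j by (simp add: nth_append del: upt_Suc)
    also have "\<dots> = pos m (2 * (j - m - 1) + 1)" by (rule blk_nth) (use False j in simp)
    also have "\<dots> = m + 1 + (j - m - 1)" by (rule pos_odd)
    finally show ?thesis using j False by simp
  qed
qed

lemma blk_semi_valid: "2 * m + 1 \<le> n \<Longrightarrow> semi_valid n (blk m)"
  unfolding semi_valid_def cyc_ordered_def blk_oeo
  using blk_len blk_distinct blk_set[of m]
  by (auto intro!: exI[where x=0])

lemma win_A:
  assumes n: "2 * m + 2 \<le> n" and x: "x < m" and s: "m + 1 \<le> s"
  shows "cyc_closed n (blk m ! (2 * x + 2)) (blk m ! ((2 * x + 2 + (2 * m + 1) - 1) mod (2 * m + 1))) \<subseteq> arc n x s"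
proof -
  have i1: "(2 * x + 2 + (2 * m + 1) - 1) mod (2 * m + 1) = 2 * x + 1"
    by (rule mod_shift_eq) (use x in auto)
  have u: "blk m ! (2 * x + 2) = x + 1" using x blk_nth[of "2 * (x + 1)" m] pos_even[of m "x+1"] by simp
  have w: "blk m ! (2 * x + 1) = m + 1 + x" using x blk_nth[of "2 * x + 1" m] pos_odd[of m x] by simp
  have "cyc_closed n (x + 1) (m + 1 + x) = arc n (x + 1 + n - 1) ((m + 1 + x + n - (x + 1)) mod n + 1)"
    by (rule cyc_closed_arc) (use n x in auto)
  also have "(m + 1 + x + n - (x + 1)) mod n = m" using n by simp
  also have "x + 1 + n - 1 = x + 0 + n" by simp
  also have "arc n (x + 0 + n) (m + 1) = arc n (x + 0) (m + 1)" by (rule arc_plus_n)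
  also have "\<dots> \<subseteq> arc n x s" by (rule arc_mono) (use s in simp)
  finally show ?thesis using i1 u w by simp
qed

lemma win_B:
  assumes n: "2 * m + 2 \<le> n" and x1: "n + m \<le> x + s" and x2: "x < n"
  shows "cyc_closed n (blk m ! 0) (blk m ! ((0 + (2 * m + 1) - 1) mod (2 * m + 1))) \<subseteq> arc n x s"
proof -
  have u: "blk m ! 0 = 0" using blk_nth[of 0 m] pos_even[of m 0] by simp
  have w: "blk m ! (2 * m) = m" using blk_nth[of "2 * m" m] pos_even[of m m] by simp
  have "cyc_closed n 0 m = arc n (0 + n - 1) ((m + n - 0) mod n + 1)"
    by (rule cyc_closed_arc) (use n in auto)
  also have "(m + n - 0) mod n = m" using n by simp
  also have "0 + n - 1 = x + (n - 1 - x)" using x2 by simp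
  also have "arc n (x + (n - 1 - x)) (m + 1) \<subseteq> arc n x s" by (rule arc_mono) (use x1 x2 in simp)
  finally show ?thesis using u w by simp
qed

lemma win_C:
  assumes n: "2 * m + 2 \<le> n" and x1: "m \<le> x" and x2: "x < 2 * m" and s: "n - m \<le> s"
  shows "cyc_closed n (blk m ! (2 * (x - m) + 1)) (blk m ! ((2 * (x - m) + 1 + (2 * m + 1) - 1) mod (2 * m + 1))) \<subseteq> arc n x s"
proof -
  have i1: "(2 * (x - m) + 1 + (2 * m + 1) - 1) mod (2 * m + 1) = 2 * (x - m)"
    by (rule mod_shift_eq) (use x1 x2 in auto)
  have u: "blk m ! (2 * (x - m) + 1) = x + 1" using x1 x2 blk_nth[of "2 * (x - m) + 1" m] pos_odd[of m "x - m"] by simp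
  have w: "blk m ! (2 * (x - m)) = x - m" using x1 x2 blk_nth[of "2 * (x - m)" m] pos_even[of m "x - m"] by simp
  have "cyc_closed n (x + 1) (x - m) = arc n (x + 1 + n - 1) ((x - m + n - (x + 1)) mod n + 1)"
    by (rule cyc_closed_arc) (use n x1 x2 in auto)
  also have "(x - m + n - (x + 1)) mod n = n - m - 1" using n x1 x2 by simp
  also have "x + 1 + n - 1 = x + 0 + n" by simp
  also have "arc n (x + 0 + n) (n - m - 1 + 1) = arc n (x + 0) (n - m - 1 + 1)" by (rule arc_plus_n)
  also have "\<dots> \<subseteq> arc n x s" by (rule arc_mono) (use s n in simp)
  finally show ?thesis using i1 u w by simp
qed

definition Good0 :: "nat \<Rightarrow> nat \<Rightarrow> nat \<Rightarrow> nat set" where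
  "Good0 n m s = (if s \<le> m then {} else if s < n - m then {..<m} \<union> {n + m - s..<n} else {..<n})"

definition Gf :: "nat \<Rightarrow> nat \<Rightarrow> nat \<Rightarrow> nat" where
  "Gf n m s = (if s \<le> m then 0 else if s < n - m then s else n)"

lemma card_Good0: "s \<le> n \<Longrightarrow> card (Good0 n m s) = Gf n m s"
proof -
  assume s: "s \<le> n"
  show ?thesis
  proof (cases "s \<le> m")
    case True thus ?thesis unfolding Good0_def Gf_def by simp
  next
    case False
    show ?thesis
    proof (cases "s < n - m")
      case True
      have "card ({..<m} \<union> {n + m - s..<n}) = card {..<m} + card {n + m - s..<n}"
        by (rule card_Un_disjoint) (use s False True in auto)
      thus ?thesis using False True s unfolding Good0_def Gf_def by simp
    next
      case F2: False
      thus ?thesis using False unfolding Good0_def Gf_def by simp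
    qed
  qed
qed

lemma Good0_window:
  assumes n: "2 * m + 2 \<le> n" and m: "1 \<le> m" and s: "s \<le> n" and x: "x \<in> Good0 n m s"
  shows "x < n \<and> (\<exists>i < 2 * m + 1. cyc_closed n (blk m ! i) (blk m ! ((i + (2 * m + 1) - 1) mod (2 * m + 1))) \<subseteq> arc n x s)"
proof (cases "s \<le> m")
  case True thus ?thesis using x unfolding Good0_def by simp
next
  case sm: False
  show ?thesis
  proof (cases "s < n - m")
    case True
    hence x': "x < m \<or> (n + m - s \<le> x \<and> x < n)" using x sm unfolding Good0_def by auto
    thus ?thesis
    proof
      assume "x < m"
      thus ?thesis using win_A[OF n _ , of x s] sm n by (intro conjI exI[where x="2 * x + 2"]) auto
    next
      assume h: "n + m - s \<le> x \<and> x < n"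
      hence "n + m \<le> x + s" using s by linarith
      thus ?thesis using win_B[OF n, of x s] h by (intro conjI exI[where x=0]) auto
    qed
  next
    case False
    hence xn: "x < n" using x sm unfolding Good0_def by auto
    consider "x < m" | "m \<le> x \<and> x < 2 * m" | "2 * m \<le> x" by linarith
    thus ?thesis
    proof cases
      case 1
      thus ?thesis using win_A[OF n _ , of x s] sm n xn by (intro conjI exI[where x="2 * x + 2"]) auto
    next
      case 2
      thus ?thesis using win_C[OF n, of x s] False xn by (intro conjI exI[where x="2 * (x - m) + 1"]) auto
    next
      case 3
      hence "n + m \<le> x + s" using False s by linarith
      thus ?thesis using win_B[OF n, of x s] xn by (intro conjI exI[where x=0]) auto
    qed
  qed
qed


definition AllR :: "nat \<Rightarrow> nat \<Rightarrow> nat set set" where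
  "AllR n r = {e. e \<subseteq> {..<n} \<and> card e = r}"

lemma H_sub: "H n r C \<subseteq> AllR n r" unfolding H_def AllR_def by auto

lemma finite_AllR: "finite (AllR n r)" unfolding AllR_def by (rule finite_subset[of _ "Pow {..<n}"]) auto

lemma card_AllR: "card (AllR n r) = n choose r"
  unfolding AllR_def using n_subsets[of "{..<n}" r] by simp

lemma Exs_sub: "Exs n r x s \<subseteq> AllR n r" unfolding Exs_def AllR_def by auto

lemma bad_upper:
  assumes sv: "semi_valid n C" and len: "length C = 2 * M + 1" and n: "0 < n" and r: "3 \<le> r"
  shows "card (AllR n r - H n r C) \<le> (\<Sum>s=1..n-1. ((n - s - 2) choose (r - 2)) * Fc n (set C) (M + 1) s)"
proof -
  define Gd where "Gd s = {x. x < n \<and> M + 1 \<le> card (set C \<inter> arc n x s)}" for s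
  define I where "I = Sigma {1..n-1} Gd"
  have finI: "finite I" unfolding I_def Gd_def by auto
  have Cn: "set C \<subseteq> {..<n}" using sv unfolding semi_valid_def by simp
  have incl: "AllR n r - H n r C \<subseteq> (\<Union>p\<in>I. Exs n r (snd p) (fst p))"
  proof
    fix e assume e: "e \<in> AllR n r - H n r C"
    hence eA: "e \<subseteq> {..<n}" "card e = r" unfolding AllR_def by auto
    from e obtain i where i: "i < length C"
      and dis: "e \<inter> cyc_closed n (C ! i) (C ! ((i + length C - 1) mod length C)) = {}"
      unfolding AllR_def H_def by auto
    let ?u = "C ! i" and ?w = "C ! ((i + length C - 1) mod length C)"
    have un: "?u < n" using Cn i nth_mem by blast
    have lp: "0 < length C" using i by linarith
    have "(i + length C - 1) mod length C < length C" using mod_less_divisor[OF lp] by blast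
    hence "?w \<in> set C" by (rule nth_mem)
    hence wn: "?w < n" using Cn by auto
    let ?L = "(?w + n - ?u) mod n + 1"
    have W: "cyc_closed n ?u ?w = arc n ((?u + n - 1) mod n) ?L"
      using cyc_closed_arc[OF n un wn] arc_mod by simp
    have ne: "e \<noteq> {}" using eA r by auto
    obtain x s where xs: "x \<in> e" "1 \<le> s" "s + 1 \<le> n" "(x + s + 1) mod n \<in> e" "e \<inter> arc n x s = {}"
      "arc n ((?u + n - 1) mod n) ?L \<subseteq> arc n x s"
      using gap_arc[OF n eA(1) ne _ _ dis[unfolded W]] n by auto
    have "M + 1 \<le> card (set C \<inter> cyc_closed n ?u ?w)" using window_card[OF sv len, of i] i len by simp
    also have "\<dots> \<le> card (set C \<inter> arc n x s)"
      by (rule card_mono) (use xs(6) W in auto)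
    finally have "x \<in> Gd s" unfolding Gd_def using xs eA by auto
    hence "(s, x) \<in> I" unfolding I_def using xs by auto
    moreover have "e \<in> Exs n r x s" unfolding Exs_def using xs eA by auto
    ultimately show "e \<in> (\<Union>p\<in>I. Exs n r (snd p) (fst p))" by force
  qed
  have "card (AllR n r - H n r C) \<le> card (\<Union>p\<in>I. Exs n r (snd p) (fst p))"
  proof (rule card_mono[OF _ incl])
    have "(\<Union>p\<in>I. Exs n r (snd p) (fst p)) \<subseteq> AllR n r" by (rule UN_least) (rule Exs_sub)
    thus "finite (\<Union>p\<in>I. Exs n r (snd p) (fst p))" using finite_AllR finite_subset by blast
  qed
  also have "\<dots> \<le> (\<Sum>p\<in>I. card (Exs n r (snd p) (fst p)))" by (rule card_UN_le[OF finI])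
  also have "\<dots> = (\<Sum>s\<in>{1..n-1}. \<Sum>x\<in>Gd s. card (Exs n r x s))"
    unfolding I_def by (subst sum.Sigma) (auto simp: Gd_def split_beta)
  also have "\<dots> = (\<Sum>s\<in>{1..n-1}. \<Sum>x\<in>Gd s. (n - s - 2) choose (r - 2))"
  proof (rule sum.cong[OF refl], rule sum.cong[OF refl])
    fix s x assume "s \<in> {1..n-1}" "x \<in> Gd s"
    thus "card (Exs n r x s) = (n - s - 2) choose (r - 2)"
      using card_Exs[of x n s r] r unfolding Gd_def by auto
  qed
  also have "\<dots> = (\<Sum>s=1..n-1. ((n - s - 2) choose (r - 2)) * Fc n (set C) (M + 1) s)"
    unfolding Fc_def Gd_def by (simp add: mult.commute)
  finally show ?thesis .
qed

lemma bad_lower: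
  assumes n: "2 * m + 2 \<le> n" and m: "1 \<le> m" and r: "3 \<le> r"
  shows "(\<Sum>s=1..n-1. ((n - s - 2) choose (r - 2)) * Gf n m s) \<le> card (AllR n r - H n r (blk m))"
proof -
  define I where "I = Sigma {1..n-1} (Good0 n m)"
  have finI: "finite I" unfolding I_def Good0_def by auto
  have sv: "semi_valid n (blk m)" using blk_semi_valid n by simp
  have win: "x < n \<and> (\<exists>i < 2 * m + 1. cyc_closed n (blk m ! i) (blk m ! ((i + (2 * m + 1) - 1) mod (2 * m + 1))) \<subseteq> arc n x s)"
    if "(s, x) \<in> I" for s x
    using Good0_window[OF n m, of s x] that unfolding I_def by auto
  have maj: "m + 1 \<le> card (set (blk m) \<inter> arc n x s)" if h: "(s, x) \<in> I" for s x
  proof -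
    obtain i where i: "i < 2 * m + 1"
      and sub: "cyc_closed n (blk m ! i) (blk m ! ((i + (2 * m + 1) - 1) mod (2 * m + 1))) \<subseteq> arc n x s"
      using win[OF h] by blast
    have "m + 1 \<le> card (set (blk m) \<inter> cyc_closed n (blk m ! i) (blk m ! ((i + (2 * m + 1) - 1) mod (2 * m + 1))))"
      by (rule window_card[OF sv blk_len i])
    also have "\<dots> \<le> card (set (blk m) \<inter> arc n x s)" by (rule card_mono) (use sub in auto)
    finally show ?thesis .
  qed
  have cardP: "card (set (blk m)) = 2 * m + 1" using distinct_card[OF blk_distinct] blk_len by simp
  have incl: "(\<Union>p\<in>I. Exs n r (snd p) (fst p)) \<subseteq> AllR n r - H n r (blk m)"
  proof
    fix e assume "e \<in> (\<Union>p\<in>I. Exs n r (snd p) (fst p))"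
    then obtain s x where sx: "(s, x) \<in> I" and e: "e \<in> Exs n r x s" by auto
    obtain i where i: "i < 2 * m + 1"
      and sub: "cyc_closed n (blk m ! i) (blk m ! ((i + (2 * m + 1) - 1) mod (2 * m + 1))) \<subseteq> arc n x s"
      using win[OF sx] by blast
    have "e \<inter> arc n x s = {}" using e unfolding Exs_def by simp
    hence "e \<inter> cyc_closed n (blk m ! i) (blk m ! ((i + length (blk m) - 1) mod length (blk m))) = {}"
      using sub blk_len by auto
    hence "e \<notin> H n r (blk m)" unfolding H_def using i blk_len by auto
    thus "e \<in> AllR n r - H n r (blk m)" using Exs_sub e by blast
  qed
  have disj: "\<forall>p\<in>I. \<forall>q\<in>I. p \<noteq> q \<longrightarrow> Exs n r (snd p) (fst p) \<inter> Exs n r (snd q) (fst q) = {}"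
  proof (intro ballI impI)
    fix p q assume p: "p \<in> I" and q: "q \<in> I" and pq: "p \<noteq> q"
    obtain s x where p': "p = (s, x)" by (cases p)
    obtain s' x' where q': "q = (s', x')" by (cases q)
    show "Exs n r (snd p) (fst p) \<inter> Exs n r (snd q) (fst q) = {}"
    proof (rule ccontr)
      assume "Exs n r (snd p) (fst p) \<inter> Exs n r (snd q) (fst q) \<noteq> {}"
      then obtain e where e1: "e \<in> Exs n r x s" and e2: "e \<in> Exs n r x' s'" using p' q' by auto
      have xn: "x < n" "x' < n" using win p q p' q' by auto
      have "(x, s) \<noteq> (x', s')" using pq p' q' by auto
      hence dj: "arc n x s \<inter> arc n x' s' = {}" by (rule Exs_arcs_disj[OF xn e1 e2])
      have "card (set (blk m) \<inter> arc n x s) + card (set (blk m) \<inter> arc n x' s') =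
            card ((set (blk m) \<inter> arc n x s) \<union> (set (blk m) \<inter> arc n x' s'))"
        by (rule card_Un_disjoint[symmetric]) (use dj in auto)
      also have "\<dots> \<le> card (set (blk m))" by (rule card_mono) auto
      moreover have "m + 1 \<le> card (set (blk m) \<inter> arc n x s)" using maj[of s x] p p' by simp
      moreover have "m + 1 \<le> card (set (blk m) \<inter> arc n x' s')" using maj[of s' x'] q q' by simp
      ultimately show False using cardP by linarith
    qed
  qed
  have "(\<Sum>s=1..n-1. ((n - s - 2) choose (r - 2)) * Gf n m s) = (\<Sum>s\<in>{1..n-1}. \<Sum>x\<in>Good0 n m s. (n - s - 2) choose (r - 2))"
  proof (rule sum.cong[OF refl])
    fix s assume "s \<in> {1..n-1}"
    hence "s \<le> n" by auto
    hence "card (Good0 n m s) = Gf n m s" by (rule card_Good0)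
    thus "((n - s - 2) choose (r - 2)) * Gf n m s = (\<Sum>x\<in>Good0 n m s. (n - s - 2) choose (r - 2))"
      by (simp add: mult.commute)
  qed
  also have "\<dots> = (\<Sum>s\<in>{1..n-1}. \<Sum>x\<in>Good0 n m s. card (Exs n r x s))"
  proof (rule sum.cong[OF refl], rule sum.cong[OF refl])
    fix s x assume s: "s \<in> {1..n-1}" and x: "x \<in> Good0 n m s"
    have "x < n" using win[of s x] s x unfolding I_def by auto
    thus "(n - s - 2) choose (r - 2) = card (Exs n r x s)"
      using card_Exs[of x n s r] r s by auto
  qed
  also have "\<dots> = (\<Sum>p\<in>I. card (Exs n r (snd p) (fst p)))"
    unfolding I_def by (subst sum.Sigma) (auto simp: Good0_def split_beta)
  also have "\<dots> = card (\<Union>p\<in>I. Exs n r (snd p) (fst p))"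
  proof (rule card_UN_disjoint[symmetric, OF finI _ disj])
    show "\<forall>p\<in>I. finite (Exs n r (snd p) (fst p))"
      using finite_subset[OF Exs_sub finite_AllR] by blast
  qed
  also have "\<dots> \<le> card (AllR n r - H n r (blk m))"
    by (rule card_mono[OF _ incl]) (use finite_AllR in simp)
  finally show ?thesis .
qed


lemma binom_strict:
  assumes ab: "a < b" and k1: "1 \<le> k" and kb: "k \<le> b"
  shows "a choose k < b choose k"
proof -
  obtain b' where b': "b = Suc b'" using ab by (cases b) auto
  obtain k' where k': "k = Suc k'" using k1 by (cases k) auto
  have "b choose k = (b' choose k') + (b' choose (Suc k'))" using b' k' by simp
  moreover have "0 < b' choose k'" using kb b' k' by simp
  moreover have "(a choose (Suc k')) \<le> (b' choose (Suc k'))" by (rule binomial_right_mono) (use ab b' in simp)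
  moreover have "a choose k = a choose (Suc k')" using k' by simp
  ultimately show ?thesis by linarith
qed

lemma Fc_small:
  assumes "s < q" "s \<le> n"
  shows "Fc n P q s = 0"
proof -
  have "{x. x < n \<and> q \<le> card (P \<inter> arc n x s)} = {}"
  proof (rule ccontr)
    assume "{x. x < n \<and> q \<le> card (P \<inter> arc n x s)} \<noteq> {}"
    then obtain x where x: "q \<le> card (P \<inter> arc n x s)" by auto
    have "card (P \<inter> arc n x s) \<le> card (arc n x s)" by (rule card_mono) (auto simp: arc_def)
    thus False using x card_arc[OF assms(2)] assms(1) by simp
  qed
  thus ?thesis unfolding Fc_def by simp
qed

lemma Gf_sym: "2 * m + 2 \<le> n \<Longrightarrow> 1 \<le> s \<Longrightarrow> s \<le> n - 1 \<Longrightarrow> Gf n m s + Gf n m (n - s) = n"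
  unfolding Gf_def by auto

lemma key:
  fixes l r n :: nat
  assumes l: "l \<ge> 1" and r: "r \<ge> 3" and n1: "n \<ge> 3 * r - 5" and n2: "n \<ge> 2 * l + 3"
    and sv: "semi_valid n C'" and len: "length C' = 2 * l + 3"
  shows "card (H n r (blk l)) < card (H n r C')"
proof -
  have n0: "0 < n" using n2 by simp
  have nlr: "l + r + 1 \<le> n" using l r n1 n2 by linarith
  define w where "w s = (n - s - 2) choose (r - 2)" for s
  define P where "P = set C'"
  define F where "F s = Fc n P (l + 2) s" for s
  have len': "length C' = 2 * (l + 1) + 1" using len by simp
  have Pn: "P \<subseteq> {..<n}" using sv unfolding semi_valid_def P_def by simp
  have cardP: "card P = 2 * l + 3" using sv len unfolding semi_valid_def P_def by (simp add: distinct_card)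
  have up: "card (AllR n r - H n r C') \<le> (\<Sum>s=1..n-1. w s * F s)"
    using bad_upper[OF sv len' n0 r] unfolding w_def F_def P_def by simp
  have lo: "(\<Sum>s=1..n-1. w s * Gf n l s) \<le> card (AllR n r - H n r (blk l))"
    using bad_lower[of l n r] n2 l r unfolding w_def by simp
  have symF: "F s + F (n - s) = n" if s: "1 \<le> s" "s \<le> n - 1" for s
    unfolding F_def by (rule Fc_sym[OF n0 _ Pn]) (use s cardP in auto)
  have symG: "Gf n l s + Gf n l (n - s) = n" if s: "1 \<le> s" "s \<le> n - 1" for s
    by (rule Gf_sym) (use s n2 in auto)
  have leFG: "F s \<le> Gf n l s" if s: "1 \<le> s" "2 * s < n" for s
  proof (cases "s \<le> l")
    case True
    hence "F s = 0" unfolding F_def by (intro Fc_small) (use s in auto)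
    thus ?thesis by simp
  next
    case False
    hence "Gf n l s = s" unfolding Gf_def using s by auto
    moreover have "F s \<le> s" unfolding F_def by (rule katona[OF n0 s(1) _ Pn]) (use s cardP in auto)
    ultimately show ?thesis by simp
  qed
  have wmono: "w t \<le> w s" if "1 \<le> s" "s \<le> t" "t \<le> n - 1" for s t
    unfolding w_def using that by (intro binomial_right_mono) simp
  have s01: "1 \<le> l + 1" by simp
  have s02: "2 * (l + 1) < n" using n2 by simp
  have s03: "F (l + 1) < Gf n l (l + 1)"
  proof -
    have "F (l + 1) = 0" unfolding F_def by (intro Fc_small) (use n2 in auto)
    moreover have "Gf n l (l + 1) = l + 1" unfolding Gf_def using n2 by auto
    ultimately show ?thesis by simp
  qed
  have s04: "w (n - (l + 1)) < w (l + 1)"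
  proof -
    have "n - (n - (l + 1)) - 2 = l - 1" using n2 by simp
    hence "w (n - (l + 1)) = (l - 1) choose (r - 2)" unfolding w_def by simp
    moreover have "w (l + 1) = (n - l - 3) choose (r - 2)" unfolding w_def by (simp add: numeral_3_eq_3)
    moreover have "(l - 1) choose (r - 2) < (n - l - 3) choose (r - 2)"
      by (rule binom_strict) (use nlr n2 r in auto)
    ultimately show ?thesis by simp
  qed
  have mid: "(\<Sum>s=1..n-1. w s * F s) < (\<Sum>s=1..n-1. w s * Gf n l s)"
    by (rule sym_sum_ineq[OF symF symG leFG wmono s01 s02 s03 s04])
  have b1: "card (AllR n r - H n r C') < card (AllR n r - H n r (blk l))" using up mid lo by linarith
  have fin: "finite (AllR n r)" by (rule finite_AllR)
  have c1: "card (AllR n r - H n r C') = card (AllR n r) - card (H n r C')"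
    by (rule card_Diff_subset[OF finite_subset[OF H_sub fin] H_sub])
  have c2: "card (AllR n r - H n r (blk l)) = card (AllR n r) - card (H n r (blk l))"
    by (rule card_Diff_subset[OF finite_subset[OF H_sub fin] H_sub])
  have c3: "card (H n r C') \<le> card (AllR n r)" by (rule card_mono[OF fin H_sub])
  have c4: "card (H n r (blk l)) \<le> card (AllR n r)" by (rule card_mono[OF fin H_sub])
  show ?thesis using b1 c1 c2 c3 c4 by linarith
qed

theorem proposition3p10:
  fixes l r n :: nat
  assumes "l \<ge> 1" and "r \<ge> 3" and "n \<ge> 3 * r - 5" and "n \<ge> 2 * l + 3"
  shows "Min {card (H n r C) | C. semi_valid n C \<and> length C = 2 * l + 1}
       < Min {card (H n r C') | C'. semi_valid n C' \<and> length C' = 2 * l + 3}"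
proof -
  let ?A = "{card (H n r C) | C. semi_valid n C \<and> length C = 2 * l + 1}"
  let ?B = "{card (H n r C') | C'. semi_valid n C' \<and> length C' = 2 * l + 3}"
  have bnd: "card (H n r C) \<le> n choose r" for C
    using card_mono[OF finite_AllR H_sub] card_AllR by metis
  have finA: "finite ?A" by (rule finite_subset[of _ "{..n choose r}"]) (use bnd in auto)
  have finB: "finite ?B" by (rule finite_subset[of _ "{..n choose r}"]) (use bnd in auto)
  have blkA: "card (H n r (blk l)) \<in> ?A"
    using blk_semi_valid[of l n] blk_len[of l] assms by auto
  have "semi_valid n (blk (l + 1))" using blk_semi_valid[of "l + 1" n] assms by simp
  moreover have "length (blk (l + 1)) = 2 * l + 3" using blk_len[of "l + 1"] by simp
  ultimately have neB: "?B \<noteq> {}" by blast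
  have "Min ?B \<in> ?B" by (rule Min_in[OF finB neB])
  then obtain C' where C': "Min ?B = card (H n r C')" "semi_valid n C'" "length C' = 2 * l + 3" by auto
  have "Min ?A \<le> card (H n r (blk l))" by (rule Min_le[OF finA blkA])
  also have "\<dots> < card (H n r C')" by (rule key[OF assms C'(2,3)])
  finally show ?thesis using C'(1) by simp
qed


end
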